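(* Let $r_{BD}$ be the Belavin–Drinfeld $r$-matrix for $sl(n,\overline{\mathbb{K}})$ associated to an admissible triple $(\Gamma_1,\Gamma_2,\tau)$. Then $C(r_{BD})$ consists exactly of the diagonal matrices $T=\mathrm{diag}(t_1,\dots,t_n)$ with $t_i=s_is_{i+1}\cdots s_n$, where $s_1,\dots,s_n\in\overline{\mathbb{K}}^\times$ satisfy $s_i=s_j$ whenever $\alpha_i\in\Gamma_1$ and $\tau(\alpha_i)=\alpha_j$.
   Context: $\mathbb{K}=\mathbb{C}((\hbar))$, $\overline{\mathbb{K}}$ its algebraic closure. For $sl(n)$: Cartan $\mathfrak{h}$ = traceless diagonal matrices, simple roots $\alpha_i=\epsilon_i-\epsilon_{i+1}$, root vectors $e_{\epsilon_i-\epsilon_k}=e_{ik}$, $\Omega=\sum_{i,k}e_{ik}\otimes e_{ki}-\frac1nI\otimes I$ with Cartan part $\Omega_0$. Admissible triple: $\Gamma_1,\Gamma_2\subset\{\alpha_1,\dots,\alpha_{n-1}\}$, $\tau:\Gamma_1\to\Gamma_2$ isometric bijection with every $\alpha\in\Gamma_1$ having some $\tau^k(\alpha)\notin\Gamma_1$. $r_{BD}=r_0+\sum_{\alpha>0}e_\alpha\otimes e_{-\alpha}+\sum_{\beta\in(\mathbb{Z}\Gamma_1)^+}\sum_{k\ge1}e_\beta\wedge e_{-\tau^k(\beta)}$ with $r_0\in\mathfrak{h}(\overline{\mathbb{K}})^{\otimes2}$, $r_0+r_0^{21}=\Omega_0$, $(\tau(\alpha)\otimes1+1\otimes\alpha)(r_0)=0$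 for $\alpha\in\Gamma_1$. $C(r)=\{X\in GL(n,\overline{\mathbb{K}}):(\mathrm{Ad}_X\otimes\mathrm{Ad}_X)(r)=r\}$ with $\mathrm{Ad}_X(a)=XaX^{-1}$. *)

theory Defs
  imports "HOL-Algebra.Algebraic_Closure_Type"
    "HOL-Computational_Algebra.Formal_Laurent_Series"
begin

text \<open>The field \<open>K-bar\<close>: algebraic closure of the Laurent series field C((h)).\<close>
type_synonym Kbar = "complex fls alg_closure"

text \<open>n x n matrices are functions nat => nat => 'a, indices 1..n, zero outside.
  Elements of gl(n) (x) gl(n) are 4-index arrays: T i j k l is the coefficient
  of e_ij (x) e_kl.\<close>
type_synonym 'a sqmat = "nat \<Rightarrow> nat \<Rightarrow> 'a"
type_synonym 'a tens = "nat \<Rightarrow> nat \<Rightarrow> nat \<Rightarrow> nat \<Rightarrow> 'a"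

definition is_mat :: "nat \<Rightarrow> 'a::zero sqmat \<Rightarrow> bool" where
  "is_mat n M \<longleftrightarrow> (\<forall>i j. (i \<notin> {1..n} \<or> j \<notin> {1..n}) \<longrightarrow> M i j = 0)"

definition mat_mult :: "nat \<Rightarrow> 'a::comm_ring_1 sqmat \<Rightarrow> 'a sqmat \<Rightarrow> 'a sqmat" where
  "mat_mult n P Q = (\<lambda>i j. \<Sum>k\<in>{1..n}. P i k * Q k j)"

definition mat_id :: "nat \<Rightarrow> 'a::comm_ring_1 sqmat" where
  "mat_id n = (\<lambda>i j. if i = j \<and> i \<in> {1..n} then 1 else 0)"

definition emat :: "nat \<Rightarrow> nat \<Rightarrow> 'a::comm_ring_1 sqmat" where
  "emat i j = (\<lambda>a b. if a = i \<and> b = j then 1 else 0)"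

definition diag_mat :: "nat \<Rightarrow> (nat \<Rightarrow> 'a::comm_ring_1) \<Rightarrow> 'a sqmat" where
  "diag_mat n t = (\<lambda>i j. if i = j \<and> i \<in> {1..n} then t i else 0)"

definition inverse_pair :: "nat \<Rightarrow> 'a::comm_ring_1 sqmat \<Rightarrow> 'a sqmat \<Rightarrow> bool" where
  "inverse_pair n P Q \<longleftrightarrow> is_mat n Q \<and> mat_mult n P Q = mat_id n \<and> mat_mult n Q P = mat_id n"

definition GL :: "nat \<Rightarrow> 'a::comm_ring_1 sqmat set" where
  "GL n = {P. is_mat n P \<and> (\<exists>Q. inverse_pair n P Q)}"

definition mat_inv :: "nat \<Rightarrow> 'a::comm_ring_1 sqmat \<Rightarrow> 'a sqmat" where
  "mat_inv n P = (THE Q. inverse_pair n P Q)"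

definition Ad :: "nat \<Rightarrow> 'a::comm_ring_1 sqmat \<Rightarrow> 'a sqmat \<Rightarrow> 'a sqmat" where
  "Ad n P A = mat_mult n (mat_mult n P A) (mat_inv n P)"

definition tensor :: "'a::comm_ring_1 sqmat \<Rightarrow> 'a sqmat \<Rightarrow> 'a tens" where
  "tensor A B = (\<lambda>i j k l. A i j * B k l)"

definition wedge :: "'a::comm_ring_1 sqmat \<Rightarrow> 'a sqmat \<Rightarrow> 'a tens" where
  "wedge A B = (\<lambda>i j k l. tensor A B i j k l - tensor B A i j k l)"

definition Ad2 :: "nat \<Rightarrow> 'a::comm_ring_1 sqmat \<Rightarrow> 'a tens \<Rightarrow> 'a tens" where
  "Ad2 n P T = (\<lambda>a b c d. \<Sum>i\<in>{1..n}. \<Sum>j\<in>{1..n}. \<Sum>k\<in>{1..n}. \<Sum>l\<in>{1..n}.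
      T i j k l * tensor (Ad n P (emat i j)) (Ad n P (emat k l)) a b c d)"

definition Cent :: "nat \<Rightarrow> 'a::comm_ring_1 tens \<Rightarrow> 'a sqmat set" where
  "Cent n r = {P \<in> GL n. Ad2 n P r = r}"

definition flip21 :: "'a tens \<Rightarrow> 'a tens" where
  "flip21 T = (\<lambda>i j k l. T k l i j)"

text \<open>Cartan part of the Casimir: Omega_0 = sum_i e_ii (x) e_ii - 1/n I (x) I\<close>
definition Omega0 :: "nat \<Rightarrow> 'a::field tens" where
  "Omega0 n = (\<lambda>a b c d. (\<Sum>i\<in>{1..n}. tensor (emat i i) (emat i i) a b c d)
       - tensor (mat_id n) (mat_id n) a b c d / of_nat n)"

text \<open>h (x) h, h = traceless diagonal matrices.\<close>
definition in_hh :: "nat \<Rightarrow> 'a::comm_ring_1 tens \<Rightarrow> bool" where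
  "in_hh n T \<longleftrightarrow> (\<exists>\<rho> :: nat \<Rightarrow> nat \<Rightarrow> 'a.
      (\<forall>i\<in>{1..n}. (\<Sum>k\<in>{1..n}. \<rho> i k) = 0) \<and> (\<forall>k\<in>{1..n}. (\<Sum>i\<in>{1..n}. \<rho> i k) = 0) \<and>
      T = (\<lambda>a b c d. \<Sum>i\<in>{1..n}. \<Sum>k\<in>{1..n}. \<rho> i k * tensor (emat i i) (emat k k) a b c d))"

definition root_fun :: "nat \<Rightarrow> 'a::comm_ring_1 sqmat \<Rightarrow> 'a" where
  "root_fun j A = A j j - A (Suc j) (Suc j)"

definition slot1 :: "nat \<Rightarrow> ('a::comm_ring_1 sqmat \<Rightarrow> 'a) \<Rightarrow> 'a tens \<Rightarrow> 'a sqmat" where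
  "slot1 n f T = (\<lambda>k l. \<Sum>i\<in>{1..n}. \<Sum>j\<in>{1..n}. T i j k l * f (emat i j))"

definition slot2 :: "nat \<Rightarrow> ('a::comm_ring_1 sqmat \<Rightarrow> 'a) \<Rightarrow> 'a tens \<Rightarrow> 'a sqmat" where
  "slot2 n f T = (\<lambda>i j. \<Sum>k\<in>{1..n}. \<Sum>l\<in>{1..n}. T i j k l * f (emat k l))"

text \<open>Roots in epsilon-coordinates (functions nat => int).\<close>
definition eps :: "nat \<Rightarrow> nat \<Rightarrow> int" where
  "eps i = (\<lambda>m. if m = i then 1 else 0)"

definition alpha :: "nat \<Rightarrow> nat \<Rightarrow> int" where
  "alpha i = (\<lambda>m. eps i m - eps (Suc i) m)"

text \<open>inner products of simple roots (Cartan matrix of A_{n-1})\<close>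
definition cartan :: "nat \<Rightarrow> nat \<Rightarrow> int" where
  "cartan i j = (if i = j then 2 else if Suc i = j \<or> Suc j = i then -1 else 0)"

definition admissible :: "nat \<Rightarrow> nat set \<Rightarrow> nat set \<Rightarrow> (nat \<Rightarrow> nat) \<Rightarrow> bool" where
  "admissible n G1 G2 \<tau> \<longleftrightarrow> G1 \<subseteq> {1..<n} \<and> G2 \<subseteq> {1..<n} \<and> bij_betw \<tau> G1 G2 \<and>
     (\<forall>i\<in>G1. \<forall>j\<in>G1. cartan (\<tau> i) (\<tau> j) = cartan i j) \<and>
     (\<forall>i\<in>G1. \<exists>k. (\<tau> ^^ k) i \<notin> G1)"

definition posroots :: "nat \<Rightarrow> (nat \<Rightarrow> int) set" where
  "posroots n = {(\<lambda>m. eps a m - eps b m) | a b. 1 \<le> a \<and> a < b \<and> b \<le> n}"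

definition root_of :: "nat \<Rightarrow> (nat \<Rightarrow> int) \<Rightarrow> nat \<Rightarrow> int" where
  "root_of n c = (\<lambda>m. \<Sum>i\<in>{1..<n}. c i * alpha i m)"

definition supp_in :: "(nat \<Rightarrow> int) \<Rightarrow> nat set \<Rightarrow> bool" where
  "supp_in c S \<longleftrightarrow> (\<forall>i. c i \<noteq> 0 \<longrightarrow> i \<in> S)"

definition lattice :: "nat \<Rightarrow> nat set \<Rightarrow> (nat \<Rightarrow> int) set" where
  "lattice n G1 = {root_of n c | c. supp_in c G1}"

definition coeffs :: "nat \<Rightarrow> nat set \<Rightarrow> (nat \<Rightarrow> int) \<Rightarrow> nat \<Rightarrow> int" where
  "coeffs n G1 \<beta> = (THE c. supp_in c G1 \<and> \<beta> = root_of n c)"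

text \<open>linear extension of tau on alpha-coordinates\<close>
definition tau_lin :: "nat set \<Rightarrow> (nat \<Rightarrow> nat) \<Rightarrow> (nat \<Rightarrow> int) \<Rightarrow> nat \<Rightarrow> int" where
  "tau_lin G1 \<tau> c = (\<lambda>j. \<Sum>i\<in>{i\<in>G1. \<tau> i = j}. c i)"

text \<open>tau^k(beta) is defined: tau^(m)(beta) lies in Z Gamma_1 for all m < k\<close>
definition tau_defined :: "nat \<Rightarrow> nat set \<Rightarrow> (nat \<Rightarrow> nat) \<Rightarrow> (nat \<Rightarrow> int) \<Rightarrow> nat \<Rightarrow> bool" where
  "tau_defined n G1 \<tau> \<beta> k \<longleftrightarrow> (\<forall>m<k. supp_in ((tau_lin G1 \<tau> ^^ m) (coeffs n G1 \<beta>)) G1)"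

definition tau_pow :: "nat \<Rightarrow> nat set \<Rightarrow> (nat \<Rightarrow> nat) \<Rightarrow> (nat \<Rightarrow> int) \<Rightarrow> nat \<Rightarrow> nat \<Rightarrow> int" where
  "tau_pow n G1 \<tau> \<beta> k = root_of n ((tau_lin G1 \<tau> ^^ k) (coeffs n G1 \<beta>))"

text \<open>root vector e_gamma: e_{eps_a - eps_b} = e_ab\<close>
definition root_vec :: "nat \<Rightarrow> (nat \<Rightarrow> int) \<Rightarrow> 'a::comm_ring_1 sqmat" where
  "root_vec n \<gamma> = (\<lambda>x y. \<Sum>(a,b)\<in>{(a,b). a \<in> {1..n} \<and> b \<in> {1..n} \<and> a \<noteq> b \<and>
       \<gamma> = (\<lambda>m. eps a m - eps b m)}. emat a b x y)"

definition r_BD :: "nat \<Rightarrow> nat set \<Rightarrow> (nat \<Rightarrow> nat) \<Rightarrow> 'a::comm_ring_1 tens \<Rightarrow> 'a tens" where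
  "r_BD n G1 \<tau> r0 = (\<lambda>a b c d. r0 a b c d
     + (\<Sum>(i,k)\<in>{(i,k). 1 \<le> i \<and> i < k \<and> k \<le> n}. tensor (emat i k) (emat k i) a b c d)
     + (\<Sum>\<beta>\<in>posroots n \<inter> lattice n G1. \<Sum>k\<in>{k. 1 \<le> k \<and> tau_defined n G1 \<tau> \<beta> k}.
          wedge (root_vec n \<beta>) (root_vec n (\<lambda>m. - tau_pow n G1 \<tau> \<beta> k m)) a b c d))"

end

theory Submission
  imports Defs
begin


lemma root_vec_eq:
  "root_vec n \<gamma> x y = (if x \<in> {1..n} \<and> y \<in> {1..n} \<and> x \<noteq> y \<and> \<gamma> = (\<lambda>m. eps x m - eps y m) then 1 else 0)"
proof -
  let ?S = "{(a,b). a \<in> {1..n} \<and> b \<in> {1..n} \<and> a \<noteq> b \<and> \<gamma> = (\<lambda>m. eps a m - eps b m)}"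
  have fin: "finite ?S" by (rule finite_subset[of _ "{1..n} \<times> {1..n}"]) auto
  have "root_vec n \<gamma> x y = (\<Sum>p\<in>?S. if p = (x,y) then 1 else 0)"
    unfolding root_vec_def emat_def by (intro sum.cong) (auto split: if_splits)
  also have "\<dots> = (if (x,y) \<in> ?S then 1 else 0)" using fin by (simp add: sum.delta')
  finally show ?thesis by auto
qed

lemma eps_diff_inj:
  assumes "a \<noteq> b" "(\<lambda>m. eps a m - eps b m) = (\<lambda>m. eps c m - eps d m)"
  shows "a = c \<and> b = d"
proof -
  have 1: "eps a a - eps b a = eps c a - eps d a" using assms(2) by metis
  have 2: "eps a b - eps b b = eps c b - eps d b" using assms(2) by metis
  show ?thesis using 1 2 assms(1) unfolding eps_def by (auto split: if_splits)
qed

lemma root_of_Suc: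
  assumes "supp_in c {1..<n}"
  shows "root_of n c (Suc m) = c (Suc m) - c m"
proof -
  have "root_of n c (Suc m) = (\<Sum>i\<in>{1..<n}. (if i = Suc m then c i else 0) - (if Suc i = Suc m then c i else 0))"
    unfolding root_of_def alpha_def eps_def by (intro sum.cong) (auto simp: algebra_simps)
  also have "\<dots> = (\<Sum>i\<in>{1..<n}. if i = Suc m then c i else 0) - (\<Sum>i\<in>{1..<n}. if i = m then c i else 0)"
    by (simp add: sum_subtractf)
  also have "\<dots> = c (Suc m) - c m"
  proof -
    have out: "\<And>i. i \<notin> {1..<n} \<Longrightarrow> c i = 0" using assms unfolding supp_in_def by blast
    show ?thesis by (auto simp: sum.delta out)
  qed
  finally show ?thesis .
qed

lemma supp_zero: "supp_in c {1..<n} \<Longrightarrow> c 0 = 0"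
  unfolding supp_in_def by force

lemma root_of_partial:
  assumes "supp_in c {1..<n}"
  shows "c m = (\<Sum>p\<in>{1..m}. root_of n c p)"
proof (induction m)
  case 0 then show ?case using supp_zero[OF assms] by simp
next
  case (Suc m)
  have "(\<Sum>p\<in>{1..Suc m}. root_of n c p) = (\<Sum>p\<in>{1..m}. root_of n c p) + root_of n c (Suc m)"
    by simp
  then show ?case using Suc root_of_Suc[OF assms] by simp
qed

lemma root_of_inj:
  assumes "supp_in c {1..<n}" "supp_in c' {1..<n}" "root_of n c = root_of n c'"
  shows "c = c'"
proof
  fix m show "c m = c' m" using root_of_partial[OF assms(1)] root_of_partial[OF assms(2)] assms(3) by metis
qed

lemma root_eps:
  assumes "supp_in c {1..<n}" "root_of n c = (\<lambda>m. eps u m - eps v m)" "u \<ge> 1" "v \<ge> 1"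
  shows "c i = (if u \<le> i then 1 else 0) - (if v \<le> i then 1 else 0)"
proof -
  have "c i = (\<Sum>p\<in>{1..i}. eps u p - eps v p)" using root_of_partial[OF assms(1)] assms(2) by metis
  also have "\<dots> = (\<Sum>p\<in>{1..i}. eps u p) - (\<Sum>p\<in>{1..i}. eps v p)" by (simp add: sum_subtractf)
  also have "\<dots> = (if u \<le> i then 1 else 0) - (if v \<le> i then 1 else 0)"
    unfolding eps_def using assms(3,4) by (simp add: sum.delta')
  finally show ?thesis .
qed

lemma height_eps:
  assumes "supp_in c {1..<n}" "root_of n c = (\<lambda>m. eps u m - eps v m)" "u \<in> {1..n}" "v \<in> {1..n}"
  shows "(\<Sum>i\<in>{1..<n}. c i) = int v - int u"
proof -
  have "(\<Sum>i\<in>{1..<n}. c i) = (\<Sum>i\<in>{1..<n}. (if u \<le> i then 1 else 0) - (if v \<le> i then 1 else 0))"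
    using root_eps[OF assms(1,2)] assms(3,4) by simp
  also have "\<dots> = (\<Sum>i\<in>{1..<n}. (if u \<le> i then 1 else 0)) - (\<Sum>i\<in>{1..<n}. (if v \<le> i then 1 else (0::int)))"
    by (simp add: sum_subtractf)
  also have "(\<Sum>i\<in>{1..<n}. (if u \<le> i then 1 else (0::int))) = int (card {i\<in>{1..<n}. u \<le> i})"
    by (simp add: sum.inter_filter[symmetric])
  also have "{i\<in>{1..<n}. u \<le> i} = {u..<n}" using assms(3) by auto
  also have "(\<Sum>i\<in>{1..<n}. (if v \<le> i then 1 else (0::int))) = int (card {i\<in>{1..<n}. v \<le> i})"
    by (simp add: sum.inter_filter[symmetric])
  also have "{i\<in>{1..<n}. v \<le> i} = {v..<n}" using assms(4) by auto
  finally show ?thesis using assms(3,4) by simp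
qed



lemma supp_tau_lin: "supp_in (tau_lin G1 \<tau> d) (\<tau> ` G1)"
  unfolding supp_in_def tau_lin_def
proof (intro allI impI)
  fix j assume "(\<Sum>i\<in>{i \<in> G1. \<tau> i = j}. d i) \<noteq> 0"
  then have "{i \<in> G1. \<tau> i = j} \<noteq> {}" by (metis (no_types, lifting) sum.empty)
  then show "j \<in> \<tau> ` G1" by auto
qed

lemma tau_lin_at:
  assumes "supp_in d G1" "inj_on \<tau> G1" "i \<in> G1"
  shows "tau_lin G1 \<tau> d (\<tau> i) = d i"
proof -
  have "{i' \<in> G1. \<tau> i' = \<tau> i} = {i}" using assms(2,3) by (auto dest: inj_onD)
  then show ?thesis unfolding tau_lin_def by simp
qed

lemma tau_lin_inj:
  assumes "supp_in d G1" "supp_in d' G1" "inj_on \<tau> G1" "tau_lin G1 \<tau> d = tau_lin G1 \<tau> d'"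
  shows "d = d'"
proof
  fix i show "d i = d' i"
  proof (cases "i \<in> G1")
    case True
    then show ?thesis using tau_lin_at[OF assms(1,3) True] tau_lin_at[OF assms(2,3) True] assms(4) by metis
  next
    case False
    then have "d i = 0" "d' i = 0" using assms(1,2) unfolding supp_in_def by blast+
    then show ?thesis by simp
  qed
qed

lemma tau_lin_delta:
  assumes "finite G1" "i \<in> G1"
  shows "tau_lin G1 \<tau> (\<lambda>m. if m = i then 1 else 0) = (\<lambda>m. if m = \<tau> i then 1 else 0)"
proof
  fix m
  have fin: "finite {i' \<in> G1. \<tau> i' = m}" using assms(1) by simp
  show "tau_lin G1 \<tau> (\<lambda>m. if m = i then 1 else 0) m = (if m = \<tau> i then 1 else 0)"
    unfolding tau_lin_def using fin assms(2) by (auto simp: sum.delta)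
qed

lemma height_tau_lin:
  assumes "finite G1" "\<tau> ` G1 \<subseteq> {1..<n}"
  shows "(\<Sum>j\<in>{1..<n}. tau_lin G1 \<tau> d j) = (\<Sum>i\<in>G1. d i)"
proof -
  have "(\<Sum>j\<in>{1..<n}. tau_lin G1 \<tau> d j) = (\<Sum>j\<in>{1..<n}. \<Sum>i\<in>G1. if \<tau> i = j then d i else 0)"
    unfolding tau_lin_def by (rule sum.cong[OF refl]) (simp add: sum.inter_filter[OF assms(1)])
  also have "\<dots> = (\<Sum>i\<in>G1. \<Sum>j\<in>{1..<n}. if \<tau> i = j then d i else 0)" by (rule sum.swap)
  also have "\<dots> = (\<Sum>i\<in>G1. d i)"
    using assms(2) by (intro sum.cong refl) (auto simp: sum.delta)
  finally show ?thesis .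
qed

lemma supp_sum_restrict:
  assumes "supp_in d G1" "G1 \<subseteq> {1..<n}"
  shows "(\<Sum>i\<in>G1. d i) = (\<Sum>i\<in>{1..<n}. d i)"
  using assms unfolding supp_in_def by (intro sum.mono_neutral_left) auto

lemma height_pow:
  assumes "finite G1" "\<tau> ` G1 \<subseteq> {1..<n}" "G1 \<subseteq> {1..<n}"
    and "\<forall>m<k. supp_in ((tau_lin G1 \<tau> ^^ m) c) G1"
  shows "(\<Sum>j\<in>{1..<n}. (tau_lin G1 \<tau> ^^ k) c j) = (\<Sum>j\<in>{1..<n}. c j)"
  using assms(4)
proof (induction k)
  case 0 then show ?case by simp
next
  case (Suc k)
  have "(\<Sum>j\<in>{1..<n}. (tau_lin G1 \<tau> ^^ Suc k) c j) = (\<Sum>i\<in>G1. (tau_lin G1 \<tau> ^^ k) c i)"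
    using height_tau_lin[OF assms(1,2)] by simp
  also have "\<dots> = (\<Sum>j\<in>{1..<n}. (tau_lin G1 \<tau> ^^ k) c j)"
    using Suc.prems assms(3) by (intro supp_sum_restrict) auto
  finally show ?case using Suc by simp
qed

lemma orbit_val:
  assumes "inj_on \<tau> G1" "c i \<noteq> 0"
    and "\<forall>m'<m. supp_in ((tau_lin G1 \<tau> ^^ m') c) G1"
  shows "(tau_lin G1 \<tau> ^^ m) c ((\<tau> ^^ m) i) = c i"
  using assms(3)
proof (induction m)
  case 0 then show ?case by simp
next
  case (Suc m)
  have IH: "(tau_lin G1 \<tau> ^^ m) c ((\<tau> ^^ m) i) = c i" using Suc by auto
  have s: "supp_in ((tau_lin G1 \<tau> ^^ m) c) G1" using Suc.prems by auto
  then have mem: "(\<tau> ^^ m) i \<in> G1" using IH assms(2) unfolding supp_in_def by auto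
  show ?case using tau_lin_at[OF s assms(1) mem] IH by simp
qed

lemma orbit_mem:
  assumes "inj_on \<tau> G1" "c i \<noteq> 0"
    and "\<forall>m'<k. supp_in ((tau_lin G1 \<tau> ^^ m') c) G1" "m < k"
  shows "(\<tau> ^^ m) i \<in> G1"
proof -
  have "(tau_lin G1 \<tau> ^^ m) c ((\<tau> ^^ m) i) = c i" using orbit_val[of \<tau> G1 c i m] assms by auto
  moreover have "supp_in ((tau_lin G1 \<tau> ^^ m) c) G1" using assms(3,4) by auto
  ultimately show ?thesis using assms(2) unfolding supp_in_def by auto
qed

lemma no_period:
  assumes adm: "\<forall>i\<in>G1. \<exists>k. (\<tau> ^^ k) i \<notin> G1" and inj: "inj_on \<tau> G1"
    and "supp_in c G1" "c i \<noteq> 0" "k \<ge> 1"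
    and "\<forall>m<k. supp_in ((tau_lin G1 \<tau> ^^ m) c) G1" and per: "(tau_lin G1 \<tau> ^^ k) c = c"
  shows False
proof -
  have all: "supp_in ((tau_lin G1 \<tau> ^^ m) c) G1" for m
  proof (induction m rule: less_induct)
    case (less m)
    show ?case
    proof (cases "m < k")
      case True then show ?thesis using assms(6) by auto
    next
      case False
      then have "(tau_lin G1 \<tau> ^^ m) c = (tau_lin G1 \<tau> ^^ (m - k)) ((tau_lin G1 \<tau> ^^ k) c)"
        by (metis funpow_add le_add_diff_inverse2 not_less o_apply)
      then have "(tau_lin G1 \<tau> ^^ m) c = (tau_lin G1 \<tau> ^^ (m - k)) c" using per by simp
      moreover have "m - k < m" using False assms(5) by auto
      ultimately show ?thesis using less by auto
    qed
  qed
  have iG: "i \<in> G1" using assms(3,4) unfolding supp_in_def by auto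
  obtain j where "(\<tau> ^^ j) i \<notin> G1" using adm iG by auto
  moreover have "(\<tau> ^^ j) i \<in> G1" using orbit_mem[of \<tau> G1 c i "Suc j" j] inj assms(4) all by auto
  ultimately show False by simp
qed

lemma coeffs_lattice:
  assumes "\<beta> \<in> lattice n G1" "G1 \<subseteq> {1..<n}"
  shows "supp_in (coeffs n G1 \<beta>) G1 \<and> \<beta> = root_of n (coeffs n G1 \<beta>)"
proof -
  obtain c where c: "supp_in c G1" "\<beta> = root_of n c" using assms(1) unfolding lattice_def by auto
  have sub: "supp_in d G1 \<Longrightarrow> supp_in d {1..<n}" for d using assms(2) unfolding supp_in_def by auto
  have "\<exists>!c. supp_in c G1 \<and> \<beta> = root_of n c"
    using c by (intro ex1I[of _ c]) (auto intro: root_of_inj sub)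
  then show ?thesis unfolding coeffs_def by (rule theI')
qed



lemma mat_mult_assoc: "mat_mult n (mat_mult n A B) C = mat_mult n A (mat_mult n B C)"
  unfolding mat_mult_def
  by (auto simp: sum_distrib_left sum_distrib_right mult.assoc intro!: ext sum.swap[THEN trans] sum.cong)

lemma mat_mult_id_right:
  assumes "is_mat n Q" shows "mat_mult n Q (mat_id n) = Q"
proof (intro ext)
  fix i j
  have "mat_mult n Q (mat_id n) i j = (\<Sum>k\<in>{1..n}. if k = j then Q i k else 0)"
    unfolding mat_mult_def mat_id_def by (intro sum.cong) auto
  also have "\<dots> = (if j \<in> {1..n} then Q i j else 0)" by (simp add: sum.delta)
  also have "\<dots> = Q i j" using assms unfolding is_mat_def by auto
  finally show "mat_mult n Q (mat_id n) i j = Q i j" .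
qed

lemma mat_mult_id_left:
  assumes "is_mat n Q" shows "mat_mult n (mat_id n) Q = Q"
proof (intro ext)
  fix i j
  have "mat_mult n (mat_id n) Q i j = (\<Sum>k\<in>{1..n}. if k = i then Q k j else 0)"
    unfolding mat_mult_def mat_id_def by (intro sum.cong) auto
  also have "\<dots> = (if i \<in> {1..n} then Q i j else 0)" by (simp add: sum.delta)
  also have "\<dots> = Q i j" using assms unfolding is_mat_def by auto
  finally show "mat_mult n (mat_id n) Q i j = Q i j" .
qed

lemma inv_unique:
  assumes "inverse_pair n P Q" "inverse_pair n P Q'"
  shows "Q = Q'"
proof -
  have "Q = mat_mult n Q (mat_id n)" using assms(1) mat_mult_id_right unfolding inverse_pair_def by metis
  also have "\<dots> = mat_mult n Q (mat_mult n P Q')" using assms(2) unfolding inverse_pair_def by simp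
  also have "\<dots> = mat_mult n (mat_mult n Q P) Q'" by (simp add: mat_mult_assoc)
  also have "\<dots> = Q'" using assms mat_mult_id_left unfolding inverse_pair_def by metis
  finally show ?thesis .
qed

lemma GL_inv: "P \<in> Defs.GL n \<Longrightarrow> inverse_pair n P (mat_inv n P)"
proof -
  assume "P \<in> Defs.GL n"
  then obtain Q where Q: "inverse_pair n P Q" unfolding GL_def by auto
  have "\<exists>!Q. inverse_pair n P Q" using Q inv_unique by blast
  then show ?thesis unfolding mat_inv_def by (rule theI')
qed

lemma Ad_emat:
  assumes "i \<in> {1..n}" "j \<in> {1..n}"
  shows "Ad n P (emat i j) a b = P a i * mat_inv n P j b"
proof -
  have 1: "mat_mult n P (emat i j) a c = (if c = j then P a i else 0)" for c
    unfolding mat_mult_def emat_def using assms(1) by (auto simp: if_distrib sum.delta cong: if_cong)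
  have "Ad n P (emat i j) a b = (\<Sum>c\<in>{1..n}. mat_mult n P (emat i j) a c * mat_inv n P c b)"
    unfolding Ad_def mat_mult_def[of n "mat_mult n P (emat i j)" "mat_inv n P"] by simp
  also have "\<dots> = (\<Sum>c\<in>{1..n}. if c = j then P a i * mat_inv n P c b else 0)"
    by (intro sum.cong) (auto simp: 1)
  also have "\<dots> = P a i * mat_inv n P j b" using assms(2) by (simp add: sum.delta)
  finally show ?thesis .
qed

lemma Ad2_expand:
  "Ad2 n P T a b c d = (\<Sum>i\<in>{1..n}. \<Sum>j\<in>{1..n}. \<Sum>k\<in>{1..n}. \<Sum>l\<in>{1..n}.
      T i j k l * (P a i * mat_inv n P j b) * (P c k * mat_inv n P l d))"
  unfolding Ad2_def tensor_def by (intro sum.cong refl) (simp add: Ad_emat)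



definition mc :: "nat \<Rightarrow> 'a::comm_ring_1 tens \<Rightarrow> 'a sqmat" where
  "mc n F = (\<lambda>a d. \<Sum>b\<in>{1..n}. F a b b d)"

lemma swap_in5:
  "(\<Sum>b\<in>A. \<Sum>i\<in>A. \<Sum>j\<in>A. \<Sum>k\<in>A. \<Sum>l\<in>A. f b i j k l) =
   (\<Sum>i\<in>A. \<Sum>j\<in>A. \<Sum>k\<in>A. \<Sum>l\<in>A. \<Sum>b\<in>A. f b i j k l)"
proof -
  have "(\<Sum>b\<in>A. \<Sum>i\<in>A. \<Sum>j\<in>A. \<Sum>k\<in>A. \<Sum>l\<in>A. f b i j k l) =
        (\<Sum>i\<in>A. \<Sum>b\<in>A. \<Sum>j\<in>A. \<Sum>k\<in>A. \<Sum>l\<in>A. f b i j k l)" by (rule sum.swap)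
  also have "\<dots> = (\<Sum>i\<in>A. \<Sum>j\<in>A. \<Sum>b\<in>A. \<Sum>k\<in>A. \<Sum>l\<in>A. f b i j k l)"
    by (intro sum.cong refl sum.swap)
  also have "\<dots> = (\<Sum>i\<in>A. \<Sum>j\<in>A. \<Sum>k\<in>A. \<Sum>b\<in>A. \<Sum>l\<in>A. f b i j k l)"
    by (intro sum.cong refl sum.swap)
  also have "\<dots> = (\<Sum>i\<in>A. \<Sum>j\<in>A. \<Sum>k\<in>A. \<Sum>l\<in>A. \<Sum>b\<in>A. f b i j k l)"
    by (intro sum.cong refl sum.swap)
  finally show ?thesis .
qed

lemma mc_conj:
  assumes "inverse_pair n P Q"
  shows "(\<Sum>b\<in>{1..n}. \<Sum>i\<in>{1..n}. \<Sum>j\<in>{1..n}. \<Sum>k\<in>{1..n}. \<Sum>l\<in>{1..n}.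
            T i j k l * (P a i * Q j b) * (P b k * Q l d))
       = (\<Sum>i\<in>{1..n}. \<Sum>l\<in>{1..n}. P a i * mc n T i l * Q l d)"
proof -
  let ?A = "{1..n::nat}"
  have QP: "(\<Sum>b\<in>?A. Q j b * P b k) = (if j = k then 1 else 0)" if "j \<in> ?A" "k \<in> ?A" for j k
  proof -
    have "mat_mult n Q P j k = mat_id n j k" using assms unfolding inverse_pair_def by simp
    then show ?thesis unfolding mat_mult_def mat_id_def using that by auto
  qed
  have "(\<Sum>b\<in>?A. \<Sum>i\<in>?A. \<Sum>j\<in>?A. \<Sum>k\<in>?A. \<Sum>l\<in>?A. T i j k l * (P a i * Q j b) * (P b k * Q l d))
      = (\<Sum>i\<in>?A. \<Sum>j\<in>?A. \<Sum>k\<in>?A. \<Sum>l\<in>?A. \<Sum>b\<in>?A. T i j k l * (P a i * Q j b) * (P b k * Q l d))"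
    by (rule swap_in5)
  also have "\<dots> = (\<Sum>i\<in>?A. \<Sum>j\<in>?A. \<Sum>k\<in>?A. \<Sum>l\<in>?A. (T i j k l * P a i * Q l d) * (\<Sum>b\<in>?A. Q j b * P b k))"
    by (intro sum.cong refl) (simp add: sum_distrib_left mult_ac)
  also have "\<dots> = (\<Sum>i\<in>?A. \<Sum>j\<in>?A. \<Sum>k\<in>?A. if j = k then (\<Sum>l\<in>?A. T i j k l * P a i * Q l d) else 0)"
    apply (rule sum.cong[OF refl], rule sum.cong[OF refl], rule sum.cong[OF refl])
    subgoal for i j k using QP[of j k] by simp
    done
  also have "\<dots> = (\<Sum>i\<in>?A. \<Sum>j\<in>?A. \<Sum>l\<in>?A. T i j j l * P a i * Q l d)"
    by (rule sum.cong[OF refl], rule sum.cong[OF refl]) (simp add: sum.delta)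
  also have "\<dots> = (\<Sum>i\<in>?A. \<Sum>l\<in>?A. \<Sum>j\<in>?A. T i j j l * P a i * Q l d)"
    by (intro sum.cong refl sum.swap)
  also have "\<dots> = (\<Sum>i\<in>?A. \<Sum>l\<in>?A. P a i * mc n T i l * Q l d)"
    unfolding mc_def by (intro sum.cong refl) (simp add: sum_distrib_left sum_distrib_right mult_ac)
  finally show ?thesis .
qed

lemma mc_Ad2:
  assumes "P \<in> Defs.GL n"
  shows "mc n (Ad2 n P T) a d = (\<Sum>i\<in>{1..n}. \<Sum>l\<in>{1..n}. P a i * mc n T i l * mat_inv n P l d)"
  unfolding mc_def[of n "Ad2 n P T"] Ad2_expand using mc_conj[OF GL_inv[OF assms]]
  by (simp add: mc_def)



lemma commute_diag:
  assumes P: "P \<in> Defs.GL n" and fx: "Ad2 n P F = F"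
    and diag: "\<And>i l. i \<in> {1..n} \<Longrightarrow> l \<in> {1..n} \<Longrightarrow> mc n F i l = (if i = l then \<mu> i else 0)"
    and a: "a \<in> {1..n}" and b: "b \<in> {1..n}"
  shows "(\<mu> a - \<mu> b) * P a b = 0"
proof -
  let ?A = "{1..n::nat}"
  let ?Q = "mat_inv n P"
  have inv: "inverse_pair n P ?Q" by (rule GL_inv[OF P])
  have QP: "(\<Sum>d\<in>?A. ?Q i d * P d b) = (if i = b then 1 else 0)" if "i \<in> ?A" for i
  proof -
    have "mat_mult n ?Q P i b = mat_id n i b" using inv unfolding inverse_pair_def by simp
    then show ?thesis unfolding mat_mult_def mat_id_def using that b by auto
  qed
  have md: "mc n F a d = (\<Sum>i\<in>?A. P a i * \<mu> i * ?Q i d)" if "d \<in> ?A" for d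
  proof -
    have "mc n F a d = mc n (Ad2 n P F) a d" using fx by simp
    also have "\<dots> = (\<Sum>i\<in>?A. \<Sum>l\<in>?A. P a i * mc n F i l * ?Q l d)" by (rule mc_Ad2[OF P])
    also have "\<dots> = (\<Sum>i\<in>?A. \<Sum>l\<in>?A. if l = i then P a i * \<mu> i * ?Q i d else 0)"
      by (intro sum.cong refl) (auto simp: diag)
    also have "\<dots> = (\<Sum>i\<in>?A. P a i * \<mu> i * ?Q i d)" by (simp add: sum.delta)
    finally show ?thesis .
  qed
  have "(\<Sum>d\<in>?A. mc n F a d * P d b) = (\<Sum>d\<in>?A. if d = a then \<mu> a * P d b else 0)"
    apply (rule sum.cong[OF refl])
    subgoal for d using diag[OF a, of d] by auto
    done
  also have "\<dots> = \<mu> a * P a b" using a by (simp add: sum.delta)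
  finally have 1: "(\<Sum>d\<in>?A. mc n F a d * P d b) = \<mu> a * P a b" .
  have "(\<Sum>d\<in>?A. mc n F a d * P d b) = (\<Sum>d\<in>?A. \<Sum>i\<in>?A. P a i * \<mu> i * (?Q i d * P d b))"
    by (intro sum.cong refl) (simp add: md sum_distrib_right sum_distrib_left mult_ac)
  also have "\<dots> = (\<Sum>i\<in>?A. P a i * \<mu> i * (\<Sum>d\<in>?A. ?Q i d * P d b))"
    by (subst sum.swap) (simp add: sum_distrib_left)
  also have "\<dots> = (\<Sum>i\<in>?A. if i = b then P a i * \<mu> i else 0)"
    apply (rule sum.cong[OF refl])
    subgoal for i using QP[of i] by simp
    done
  also have "\<dots> = P a b * \<mu> b" using b by (simp add: sum.delta)
  finally have 2: "(\<Sum>d\<in>?A. mc n F a d * P d b) = P a b * \<mu> b" .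
  from 1 2 show ?thesis by (simp add: algebra_simps)
qed

lemma adm_facts:
  assumes "admissible n G1 G2 \<tau>"
  shows "G1 \<subseteq> {1..<n}" "G2 \<subseteq> {1..<n}" "inj_on \<tau> G1" "\<tau> ` G1 = G2" "finite G1"
    "\<forall>i\<in>G1. \<exists>k. (\<tau> ^^ k) i \<notin> G1"
  using assms unfolding admissible_def bij_betw_def by (auto intro: finite_subset)

lemma supp_mono: "supp_in c A \<Longrightarrow> A \<subseteq> B \<Longrightarrow> supp_in c B"
  unfolding supp_in_def by auto

lemma supp_pow:
  assumes "admissible n G1 G2 \<tau>" "k \<ge> 1"
  shows "supp_in ((tau_lin G1 \<tau> ^^ k) c) {1..<n}"
proof -
  obtain k' where k: "k = Suc k'" using assms(2) by (cases k) auto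
  have "supp_in ((tau_lin G1 \<tau> ^^ k) c) (\<tau> ` G1)" unfolding k using supp_tau_lin by simp
  then show ?thesis using adm_facts[OF assms(1)] by (auto intro: supp_mono)
qed

lemma pos_root_data:
  assumes adm: "admissible n G1 G2 \<tau>" and \<beta>: "\<beta> \<in> posroots n \<inter> lattice n G1"
  obtains a b where "1 \<le> a" "a < b" "b \<le> n" "\<beta> = (\<lambda>m. eps a m - eps b m)"
    "supp_in (coeffs n G1 \<beta>) G1" "\<beta> = root_of n (coeffs n G1 \<beta>)"
    "(\<Sum>i\<in>{1..<n}. coeffs n G1 \<beta> i) = int b - int a" "coeffs n G1 \<beta> a = 1"
proof -
  note af = adm_facts[OF adm]
  obtain a b where ab: "1 \<le> a" "a < b" "b \<le> n" "\<beta> = (\<lambda>m. eps a m - eps b m)"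
    using \<beta> unfolding posroots_def by auto
  have c: "supp_in (coeffs n G1 \<beta>) G1" "\<beta> = root_of n (coeffs n G1 \<beta>)"
    using coeffs_lattice[of \<beta> n G1] \<beta> af(1) by auto
  have cs: "supp_in (coeffs n G1 \<beta>) {1..<n}" using c(1) af(1) by (rule supp_mono)
  have h: "(\<Sum>i\<in>{1..<n}. coeffs n G1 \<beta> i) = int b - int a"
    using height_eps[OF cs, of a b] c(2) ab by auto
  have "coeffs n G1 \<beta> a = 1" using root_eps[OF cs, of a b a] c(2) ab by auto
  then show ?thesis using that ab c h by blast
qed

lemma KW:
  assumes adm: "admissible n G1 G2 \<tau>" and \<beta>: "\<beta> \<in> posroots n \<inter> lattice n G1"
    and k: "k \<ge> 1" "tau_defined n G1 \<tau> \<beta> k"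
  shows "root_vec n \<beta> x y * root_vec n (\<lambda>m. - tau_pow n G1 \<tau> \<beta> k m) y z = (0::'a::comm_ring_1)"
    "root_vec n (\<lambda>m. - tau_pow n G1 \<tau> \<beta> k m) x y * root_vec n \<beta> y z = (0::'a::comm_ring_1)"
proof -
  note af = adm_facts[OF adm]
  obtain a b where ab: "1 \<le> a" "a < b" "b \<le> n" "\<beta> = (\<lambda>m. eps a m - eps b m)"
    "supp_in (coeffs n G1 \<beta>) G1" "\<beta> = root_of n (coeffs n G1 \<beta>)"
    "(\<Sum>i\<in>{1..<n}. coeffs n G1 \<beta> i) = int b - int a" "coeffs n G1 \<beta> a = 1"
    using pos_root_data[OF adm \<beta>] by blast
  define c where "c = coeffs n G1 \<beta>"
  define c' where "c' = (tau_lin G1 \<tau> ^^ k) c"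
  have td: "\<forall>m<k. supp_in ((tau_lin G1 \<tau> ^^ m) c) G1" using k(2) unfolding tau_defined_def c_def by simp
  have cs: "supp_in c {1..<n}" using ab(5) af(1) unfolding c_def by (rule supp_mono)
  have c's: "supp_in c' {1..<n}" unfolding c'_def using supp_pow[OF adm k(1)] .
  have tp: "tau_pow n G1 \<tau> \<beta> k = root_of n c'" unfolding tau_pow_def c'_def c_def ..
  have hc': "(\<Sum>i\<in>{1..<n}. c' i) = int b - int a"
    unfolding c'_def using height_pow[OF af(5) _ af(1) td] af(2,4) ab(7) unfolding c_def by auto
  have contra: False if "root_of n c' = \<beta>"
  proof -
    have "c' = c" using root_of_inj[OF c's cs] that ab(6) unfolding c_def by simp
    then show False using no_period[OF af(6) af(3) ab(5)[folded c_def], of a k] ab(8) k(1) td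
      unfolding c'_def c_def by auto
  qed
  have neg: "(\<lambda>m. - tau_pow n G1 \<tau> \<beta> k m) = (\<lambda>m. eps u m - eps v m) \<Longrightarrow> root_of n c' = (\<lambda>m. eps v m - eps u m)" for u v
    unfolding tp by (metis (no_types, lifting) minus_diff_eq minus_minus)
  show "root_vec n \<beta> x y * root_vec n (\<lambda>m. - tau_pow n G1 \<tau> \<beta> k m) y z = (0::'a)"
  proof (rule ccontr)
    assume "root_vec n \<beta> x y * root_vec n (\<lambda>m. - tau_pow n G1 \<tau> \<beta> k m) y z \<noteq> (0::'a)"
    then have 1: "x \<in> {1..n}" "y \<in> {1..n}" "x \<noteq> y" "\<beta> = (\<lambda>m. eps x m - eps y m)"
      and 2: "z \<in> {1..n}" "y \<noteq> z" "(\<lambda>m. - tau_pow n G1 \<tau> \<beta> k m) = (\<lambda>m. eps y m - eps z m)"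
      by (auto simp: root_vec_eq split: if_splits)
    have xy: "x = a" "y = b" using eps_diff_inj[OF 1(3)] 1(4) ab(4) by metis+
    have r: "root_of n c' = (\<lambda>m. eps z m - eps y m)" using neg[OF 2(3)] .
    have "(\<Sum>i\<in>{1..<n}. c' i) = int y - int z" using height_eps[OF c's r] 1 2 by auto
    then have "z = a" using hc' xy by auto
    then show False using contra r xy ab(4) by simp
  qed
  show "root_vec n (\<lambda>m. - tau_pow n G1 \<tau> \<beta> k m) x y * root_vec n \<beta> y z = (0::'a)"
  proof (rule ccontr)
    assume "root_vec n (\<lambda>m. - tau_pow n G1 \<tau> \<beta> k m) x y * root_vec n \<beta> y z \<noteq> (0::'a)"
    then have 2: "y \<in> {1..n}" "z \<in> {1..n}" "y \<noteq> z" "\<beta> = (\<lambda>m. eps y m - eps z m)"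
      and 1: "x \<in> {1..n}" "x \<noteq> y" "(\<lambda>m. - tau_pow n G1 \<tau> \<beta> k m) = (\<lambda>m. eps x m - eps y m)"
      by (auto simp: root_vec_eq split: if_splits)
    have yz: "y = a" "z = b" using eps_diff_inj[OF 2(3)] 2(4) ab(4) by metis+
    have r: "root_of n c' = (\<lambda>m. eps y m - eps x m)" using neg[OF 1(3)] .
    have "(\<Sum>i\<in>{1..<n}. c' i) = int x - int y" using height_eps[OF c's r] 1 2 by auto
    then have "x = b" using hc' yz by auto
    then show False using contra r yz ab(4) by simp
  qed
qed



definition Std :: "nat \<Rightarrow> 'a::comm_ring_1 tens" where
  "Std n = (\<lambda>a b c d. \<Sum>(i,k)\<in>{(i,k). 1 \<le> i \<and> i < k \<and> k \<le> n}. tensor (emat i k) (emat k i) a b c d)"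

definition Wsum :: "nat \<Rightarrow> nat set \<Rightarrow> (nat \<Rightarrow> nat) \<Rightarrow> 'a::comm_ring_1 tens" where
  "Wsum n G1 \<tau> = (\<lambda>a b c d. \<Sum>\<beta>\<in>posroots n \<inter> lattice n G1. \<Sum>k\<in>{k. 1 \<le> k \<and> tau_defined n G1 \<tau> \<beta> k}.
          wedge (root_vec n \<beta>) (root_vec n (\<lambda>m. - tau_pow n G1 \<tau> \<beta> k m)) a b c d)"

lemma r_BD_split: "r_BD n G1 \<tau> r0 a b c d = r0 a b c d + Std n a b c d + Wsum n G1 \<tau> a b c d"
  unfolding r_BD_def Std_def Wsum_def by simp

lemma hh_zero:
  assumes "in_hh n r0" "x \<noteq> y \<or> z \<noteq> w"
  shows "r0 x y z w = 0"
proof -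
  obtain \<rho> where r: "r0 = (\<lambda>a b c d. \<Sum>i\<in>{1..n}. \<Sum>k\<in>{1..n}. \<rho> i k * tensor (emat i i) (emat k k) a b c d)"
    using assms(1) unfolding in_hh_def by blast
  show ?thesis unfolding r tensor_def emat_def using assms(2)
    by (intro sum.neutral ballI) auto
qed

lemma hh_out:
  assumes "in_hh n r0" "\<not> (x \<in> {1..n} \<and> y \<in> {1..n} \<and> z \<in> {1..n} \<and> w \<in> {1..n})"
  shows "r0 x y z w = 0"
proof -
  obtain \<rho> where r: "r0 = (\<lambda>a b c d. \<Sum>i\<in>{1..n}. \<Sum>k\<in>{1..n}. \<rho> i k * tensor (emat i i) (emat k k) a b c d)"
    using assms(1) unfolding in_hh_def by blast
  show ?thesis unfolding r tensor_def emat_def using assms(2)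
    by (intro sum.neutral ballI) auto
qed

lemma Std_val:
  "Std n x y z w = (if 1 \<le> x \<and> x < y \<and> y \<le> n \<and> z = y \<and> w = x then 1 else 0)"
proof -
  let ?S = "{(i,k). 1 \<le> i \<and> i < k \<and> k \<le> n}"
  have fin: "finite ?S" by (rule finite_subset[of _ "{1..n} \<times> {1..n}"]) auto
  have "Std n x y z w = (\<Sum>p\<in>?S. if p = (x,y) then (if z = y \<and> w = x then 1 else 0) else 0)"
    unfolding Std_def tensor_def emat_def by (intro sum.cong) (auto split: if_splits)
  also have "\<dots> = (if (x,y) \<in> ?S then (if z = y \<and> w = x then 1 else 0) else 0)"
    using fin by (simp add: sum.delta')
  finally show ?thesis by auto
qed

lemma Wsum_mc_zero:
  assumes "admissible n G1 G2 \<tau>"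
  shows "Wsum n G1 \<tau> a j j d = (0::'a::comm_ring_1)"
  unfolding Wsum_def wedge_def tensor_def
  by (intro sum.neutral ballI) (auto simp: KW[OF assms])

lemma mc_rBD:
  assumes adm: "admissible n G1 G2 \<tau>" and hh: "in_hh n r0" and a: "a \<in> {1..n}" and d: "d \<in> {1..n}"
  shows "mc n (r_BD n G1 \<tau> r0) a d = (if a = d then r0 a a a a + of_nat (n - a) else 0)"
proof -
  let ?A = "{1..n::nat}"
  have "mc n (r_BD n G1 \<tau> r0) a d = (\<Sum>j\<in>?A. r0 a j j d) + (\<Sum>j\<in>?A. Std n a j j d)"
    unfolding mc_def r_BD_split by (simp add: sum.distrib Wsum_mc_zero[OF adm])
  also have "(\<Sum>j\<in>?A. r0 a j j d) = (\<Sum>j\<in>?A. if j = a then r0 a a a d else 0)"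
    by (intro sum.cong refl) (auto simp: hh_zero[OF hh])
  also have "\<dots> = r0 a a a d" using a by (simp add: sum.delta)
  also have "(\<Sum>j\<in>?A. Std n a j j d) = (\<Sum>j\<in>?A. if a < j \<and> d = a then 1 else 0)"
    using a by (intro sum.cong refl) (auto simp: Std_val)
  also have "\<dots> = (if d = a then of_nat (card {j\<in>?A. a < j}) else 0)"
    by (auto simp: sum.inter_filter[symmetric])
  also have "{j\<in>?A. a < j} = {a<..n}" using a by auto
  finally show ?thesis using hh_zero[OF hh, of a a a d] by auto
qed

lemma Omega0_diag:
  assumes "x \<in> {1..n}"
  shows "Omega0 n x x x x = (1 - 1 / of_nat n :: Kbar)"
proof -
  have s: "(\<Sum>i\<in>{1..n}. tensor (emat i i) (emat i i) x x x x) = (\<Sum>i\<in>{1..n}. if i = x then (1::Kbar) else 0)"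
    unfolding tensor_def emat_def by (intro sum.cong) auto
  have s1: "(\<Sum>i\<in>{1..n}. if i = x then (1::Kbar) else 0) = 1" using assms by (simp only: sum.delta finite_atLeastAtMost if_True)
  have t: "tensor (mat_id n) (mat_id n) x x x x = (1::Kbar)" unfolding tensor_def mat_id_def using assms by simp
  show ?thesis unfolding Omega0_def by (simp only: s s1 t)
qed

lemma r0_diag_const:
  assumes om: "\<forall>a b c d. r0 a b c d + flip21 r0 a b c d = Omega0 n a b c d"
    and a: "a \<in> {1..n}" and b: "b \<in> {1..n}"
  shows "r0 a a a a = (r0 b b b b :: Kbar)"
proof -
  have 1: "r0 a a a a + r0 a a a a = Omega0 n a a a a" using om unfolding flip21_def by blast
  have 2: "r0 b b b b + r0 b b b b = Omega0 n b b b b" using om unfolding flip21_def by blast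
  have "r0 a a a a + r0 a a a a = r0 b b b b + r0 b b b b" using 1 2 Omega0_diag[OF a] Omega0_diag[OF b] by metis
  then have "2 * r0 a a a a = 2 * r0 b b b b" by (metis mult_2)
  then show ?thesis by simp
qed



lemma tele:
  fixes t s :: "nat \<Rightarrow> 'a::field"
  assumes tnz: "\<forall>p\<in>{1..n}. t p \<noteq> 0" and ts: "\<forall>p\<in>{1..<n}. t p = s p * t (Suc p)"
    and c: "supp_in c {1..<n}"
  shows "1 \<le> N \<Longrightarrow> N \<le> n \<Longrightarrow>
    (\<Prod>p\<in>{1..N}. t p powi (root_of n c p)) = (\<Prod>m\<in>{1..<N}. s m powi c m) * t N powi c N"
proof (induction N)
  case 0 then show ?case by simp
next
  case (Suc N)
  show ?case
  proof (cases "N = 0")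
    case True
    then show ?thesis using root_of_Suc[OF c, of 0] supp_zero[OF c] by simp
  next
    case False
    then have IH: "(\<Prod>p\<in>{1..N}. t p powi (root_of n c p)) = (\<Prod>m\<in>{1..<N}. s m powi c m) * t N powi c N"
      using Suc by auto
    have tN: "t N = s N * t (Suc N)" using ts Suc.prems False by auto
    have nz: "t (Suc N) \<noteq> 0" using tnz Suc.prems by auto
    have "(\<Prod>p\<in>{1..Suc N}. t p powi (root_of n c p)) = (\<Prod>p\<in>{1..N}. t p powi (root_of n c p)) * t (Suc N) powi (root_of n c (Suc N))"
      by simp
    also have "\<dots> = (\<Prod>m\<in>{1..<N}. s m powi c m) * (s N powi c N * t (Suc N) powi c N) * (t (Suc N) powi c (Suc N) / t (Suc N) powi c N)"
      unfolding IH root_of_Suc[OF c] tN power_int_mult_distrib using power_int_diff[of "t (Suc N)" "c (Suc N)" "c N"] nz by simp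
    also have "\<dots> = ((\<Prod>m\<in>{1..<N}. s m powi c m) * s N powi c N) * t (Suc N) powi c (Suc N)"
      using nz by (simp add: field_simps)
    also have "(\<Prod>m\<in>{1..<N}. s m powi c m) * s N powi c N = (\<Prod>m\<in>{1..<Suc N}. s m powi c m)"
      using False by (simp add: prod.atLeastLessThan_Suc)
    finally show ?thesis .
  qed
qed

lemma psi_root:
  fixes t s :: "nat \<Rightarrow> 'a::field"
  assumes tnz: "\<forall>p\<in>{1..n}. t p \<noteq> 0" and ts: "\<forall>p\<in>{1..<n}. t p = s p * t (Suc p)"
    and c: "supp_in c {1..<n}" and n: "n \<ge> 1"
  shows "(\<Prod>p\<in>{1..n}. t p powi (root_of n c p)) = (\<Prod>m\<in>{1..<n}. s m powi c m)"
proof -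
  have "c n = 0" using c unfolding supp_in_def by force
  then show ?thesis using tele[OF tnz ts c n order.refl] by simp
qed

lemma psi_eps:
  fixes t :: "nat \<Rightarrow> 'a::field"
  assumes "x \<in> {1..n}" "y \<in> {1..n}" "x \<noteq> y"
  shows "(\<Prod>p\<in>{1..n}. t p powi (eps x p - eps y p)) = t x * inverse (t y)"
proof -
  have "(\<Prod>p\<in>{1..n}. t p powi (eps x p - eps y p)) =
        (\<Prod>p\<in>{1..n}. (if p = x then t x else 1) * (if p = y then inverse (t y) else 1))"
    using assms(3) by (intro prod.cong) (auto simp: eps_def power_int_minus)
  also have "\<dots> = t x * inverse (t y)" using assms by (simp add: prod.distrib prod.delta)
  finally show ?thesis .
qed

lemma inv_step:
  fixes s :: "nat \<Rightarrow> 'a::field"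
  assumes fin: "finite G1" and G1: "G1 \<subseteq> {1..<n}" and G2: "\<tau> ` G1 \<subseteq> {1..<n}" and inj: "inj_on \<tau> G1"
    and sc: "\<forall>i\<in>G1. s i = s (\<tau> i)" and c: "supp_in c G1"
  shows "(\<Prod>m\<in>{1..<n}. s m powi (tau_lin G1 \<tau> c m)) = (\<Prod>m\<in>{1..<n}. s m powi c m)"
proof -
  have "(\<Prod>m\<in>{1..<n}. s m powi (tau_lin G1 \<tau> c m)) = (\<Prod>m\<in>\<tau> ` G1. s m powi (tau_lin G1 \<tau> c m))"
    apply (rule prod.mono_neutral_right)
    using G2 supp_tau_lin[of G1 \<tau> c] unfolding supp_in_def by (auto, metis power_int_0_right)
  also have "\<dots> = (\<Prod>i\<in>G1. s (\<tau> i) powi (tau_lin G1 \<tau> c (\<tau> i)))"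
    using inj by (simp add: prod.reindex)
  also have "\<dots> = (\<Prod>i\<in>G1. s i powi c i)"
    using sc tau_lin_at[OF c inj] by (intro prod.cong refl) auto
  also have "\<dots> = (\<Prod>m\<in>{1..<n}. s m powi c m)"
    apply (rule prod.mono_neutral_left)
    using G1 c unfolding supp_in_def by (auto, metis power_int_0_right)
  finally show ?thesis .
qed

lemma inv_pow:
  fixes s :: "nat \<Rightarrow> 'a::field"
  assumes fin: "finite G1" and G1: "G1 \<subseteq> {1..<n}" and G2: "\<tau> ` G1 \<subseteq> {1..<n}" and inj: "inj_on \<tau> G1"
    and sc: "\<forall>i\<in>G1. s i = s (\<tau> i)"
  shows "\<forall>m<k. supp_in ((tau_lin G1 \<tau> ^^ m) c) G1 \<Longrightarrow>
    (\<Prod>m\<in>{1..<n}. s m powi ((tau_lin G1 \<tau> ^^ k) c m)) = (\<Prod>m\<in>{1..<n}. s m powi c m)"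
proof (induction k)
  case 0 then show ?case by simp
next
  case (Suc k)
  have "(\<Prod>m\<in>{1..<n}. s m powi ((tau_lin G1 \<tau> ^^ Suc k) c m)) = (\<Prod>m\<in>{1..<n}. s m powi ((tau_lin G1 \<tau> ^^ k) c m))"
    using inv_step[OF fin G1 G2 inj sc, of "(tau_lin G1 \<tau> ^^ k) c"] Suc.prems by simp
  then show ?case using Suc by simp
qed



lemma diag_mult:
  "mat_mult n (diag_mat n t) (diag_mat n u) = diag_mat n (\<lambda>i. t i * u i)"
proof (intro ext)
  fix i j
  show "mat_mult n (diag_mat n t) (diag_mat n u) i j = diag_mat n (\<lambda>i. t i * u i) i j"
  proof -
    have "mat_mult n (diag_mat n t) (diag_mat n u) i j = (\<Sum>k\<in>{1..n}. if k = i then (if i = j \<and> i \<in> {1..n} then t i * u i else 0) else 0)"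
      unfolding mat_mult_def diag_mat_def by (intro sum.cong) auto
    also have "\<dots> = diag_mat n (\<lambda>i. t i * u i) i j" unfolding diag_mat_def by (simp add: sum.delta)
    finally show ?thesis .
  qed
qed

lemma diag_is_mat: "is_mat n (diag_mat n t)"
  unfolding is_mat_def diag_mat_def by auto

lemma diag_inv:
  fixes t :: "nat \<Rightarrow> 'a::field"
  assumes "\<forall>i\<in>{1..n}. t i \<noteq> 0"
  shows "inverse_pair n (diag_mat n t) (diag_mat n (\<lambda>i. inverse (t i)))"
    "diag_mat n t \<in> Defs.GL n"
    "mat_inv n (diag_mat n t) = diag_mat n (\<lambda>i. inverse (t i))"
proof -
  have e1: "diag_mat n (\<lambda>i. t i * inverse (t i)) = mat_id n"
    unfolding diag_mat_def mat_id_def using assms by (intro ext) auto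
  have e2: "diag_mat n (\<lambda>i. inverse (t i) * t i) = mat_id n"
    unfolding diag_mat_def mat_id_def using assms by (intro ext) auto
  show ip: "inverse_pair n (diag_mat n t) (diag_mat n (\<lambda>i. inverse (t i)))"
    unfolding inverse_pair_def using diag_mult[of n t] diag_mult[of n _ t] e1 e2 diag_is_mat by metis
  then show "diag_mat n t \<in> Defs.GL n" unfolding GL_def using diag_is_mat by blast
  then show "mat_inv n (diag_mat n t) = diag_mat n (\<lambda>i. inverse (t i))"
    using GL_inv inv_unique ip by metis
qed

lemma sum_if_const: "(\<Sum>x\<in>A. if P then f x else 0) = (if P then (\<Sum>x\<in>A. f x) else 0)"
  by (cases P) auto

lemma Ad2_diag:
  fixes t :: "nat \<Rightarrow> 'a::field"
  assumes "\<forall>i\<in>{1..n}. t i \<noteq> 0"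
  shows "Ad2 n (diag_mat n t) T a b c d =
    (if a \<in> {1..n} \<and> b \<in> {1..n} \<and> c \<in> {1..n} \<and> d \<in> {1..n}
     then T a b c d * (t a * inverse (t b)) * (t c * inverse (t d)) else 0)"
proof -
  let ?A = "{1..n::nat}"
  let ?V = "if a \<in> ?A \<and> b \<in> ?A \<and> c \<in> ?A \<and> d \<in> ?A
     then T a b c d * (t a * inverse (t b)) * (t c * inverse (t d)) else 0"
  have "Ad2 n (diag_mat n t) T a b c d = (\<Sum>i\<in>?A. \<Sum>j\<in>?A. \<Sum>k\<in>?A. \<Sum>l\<in>?A.
      if i = a then (if j = b then (if k = c then (if l = d then ?V else 0) else 0) else 0) else 0)"
    unfolding Ad2_expand diag_inv(3)[OF assms]
    by (intro sum.cong refl) (auto simp: diag_mat_def)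
  also have "\<dots> = ?V" by (simp only: sum_if_const sum.delta finite_atLeastAtMost) auto
  finally show ?thesis .
qed

lemma rBD_out:
  fixes r0 :: "'a::comm_ring_1 tens"
  assumes hh: "in_hh n r0" and out: "\<not> (x \<in> {1..n} \<and> y \<in> {1..n} \<and> z \<in> {1..n} \<and> w \<in> {1..n})"
  shows "r_BD n G1 \<tau> r0 x y z w = 0"
proof -
  have "Wsum n G1 \<tau> x y z w = (0::'a)"
    unfolding Wsum_def wedge_def tensor_def using out
    by (intro sum.neutral ballI) (auto simp: root_vec_eq)
  moreover have "Std n x y z w = (0::'a)" using out by (auto simp: Std_val)
  ultimately show ?thesis unfolding r_BD_split using hh_out[OF hh out] by simp
qed



lemma root_delta:
  assumes "j \<in> {1..<n}"
  shows "root_of n (\<lambda>m. if m = j then 1 else 0) = (\<lambda>m. eps j m - eps (Suc j) m)"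
proof
  fix m
  have "root_of n (\<lambda>m. if m = j then 1 else 0) m = (\<Sum>i\<in>{1..<n}. if i = j then alpha i m else 0)"
    unfolding root_of_def by (intro sum.cong) auto
  also have "\<dots> = alpha j m" using assms by (simp add: sum.delta)
  finally show "root_of n (\<lambda>m. if m = j then 1 else 0) m = eps j m - eps (Suc j) m" unfolding alpha_def .
qed

lemma supp_delta: "j \<in> S \<Longrightarrow> supp_in (\<lambda>m. if m = j then 1 else 0) S"
  unfolding supp_in_def by auto

lemma finite_posroots: "finite (posroots n)"
proof (rule finite_subset)
  show "posroots n \<subseteq> (\<lambda>(a,b). \<lambda>m. eps a m - eps b m) ` ({1..n} \<times> {1..n})"
    unfolding posroots_def by (auto simp: image_iff)
qed auto

lemma simple_root_data:
  assumes adm: "admissible n G1 G2 \<tau>" and i: "i \<in> G1"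
  shows "(\<lambda>m. eps i m - eps (Suc i) m) \<in> posroots n \<inter> lattice n G1"
    "coeffs n G1 (\<lambda>m. eps i m - eps (Suc i) m) = (\<lambda>m. if m = i then 1 else 0)"
proof -
  note af = adm_facts[OF adm]
  have in1: "i \<in> {1..<n}" using af(1) i by auto
  show mem: "(\<lambda>m. eps i m - eps (Suc i) m) \<in> posroots n \<inter> lattice n G1"
  proof
    have "1 \<le> i" "i < Suc i" "Suc i \<le> n" using in1 by auto
    then show "(\<lambda>m. eps i m - eps (Suc i) m) \<in> posroots n" unfolding posroots_def by blast
    show "(\<lambda>m. eps i m - eps (Suc i) m) \<in> lattice n G1" unfolding lattice_def
      using root_delta[OF in1] supp_delta[OF i] by (auto intro!: exI[of _ "\<lambda>m. if m = i then 1 else 0"])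
  qed
  have cl: "supp_in (coeffs n G1 (\<lambda>m. eps i m - eps (Suc i) m)) G1"
      "(\<lambda>m. eps i m - eps (Suc i) m) = root_of n (coeffs n G1 (\<lambda>m. eps i m - eps (Suc i) m))"
    using coeffs_lattice[of _ n G1] mem af(1) by auto
  show "coeffs n G1 (\<lambda>m. eps i m - eps (Suc i) m) = (\<lambda>m. if m = i then 1 else 0)"
    by (rule root_of_inj[of _ n]) (use cl supp_mono[OF cl(1) af(1)] root_delta[OF in1] supp_delta[OF in1] in auto)
qed

lemma tau_ne:
  assumes adm: "admissible n G1 G2 \<tau>" and i: "i \<in> G1"
  shows "\<tau> i \<noteq> i"
proof
  assume e: "\<tau> i = i"
  have "(\<tau> ^^ k) i = i" for k by (induction k) (auto simp: e)
  then show False using adm_facts(6)[OF adm] i by auto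
qed

lemma rBD_comp:
  fixes r0 :: "'a::{comm_ring_1} tens"
  assumes adm: "admissible n G1 G2 \<tau>" and hh: "in_hh n r0" and i: "i \<in> G1"
  shows "r_BD n G1 \<tau> r0 i (Suc i) (Suc (\<tau> i)) (\<tau> i) = 1"
proof -
  note af = adm_facts[OF adm]
  define j where "j = \<tau> i"
  define ai where "ai = (\<lambda>m. eps i m - eps (Suc i) m)"
  define aj where "aj = (\<lambda>m. eps (Suc j) m - eps j m)"
  define d where "d = (\<lambda>m::nat. if m = i then 1 else (0::int))"
  define S where "S = posroots n \<inter> lattice n G1"
  define K where "K = (\<lambda>\<beta>. {k. 1 \<le> k \<and> tau_defined n G1 \<tau> \<beta> k})"
  define del where "del = (\<lambda>\<beta> k m. - tau_pow n G1 \<tau> \<beta> k m)"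
  have in1: "i \<in> {1..<n}" using af(1) i by auto
  have jG2: "j \<in> G2" using af(4) i unfolding j_def by auto
  have jn: "j \<in> {1..<n}" using af(2) jG2 by auto
  have jne: "j \<noteq> i" using tau_ne[OF adm i] unfolding j_def .
  have aiS: "ai \<in> S" unfolding ai_def S_def using simple_root_data(1)[OF adm i] .
  have cai: "coeffs n G1 ai = d" unfolding ai_def d_def using simple_root_data(2)[OF adm i] .
  have dsupp: "supp_in d G1" unfolding d_def using supp_delta[OF i] .
  have td: "tau_defined n G1 \<tau> ai k \<longleftrightarrow> (\<forall>m<k. supp_in ((tau_lin G1 \<tau> ^^ m) d) G1)" for k
    unfolding tau_defined_def cai ..
  have di: "d i \<noteq> 0" unfolding d_def by simp
  obtain j0 where j0: "(\<tau> ^^ j0) i \<notin> G1" using af(6) i by blast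
  have Ksub: "K ai \<subseteq> {1..j0}"
  proof
    fix k assume "k \<in> K ai"
    then have k: "1 \<le> k" "\<forall>m<k. supp_in ((tau_lin G1 \<tau> ^^ m) d) G1" unfolding K_def td by auto
    have "k \<le> j0"
    proof (rule ccontr)
      assume "\<not> k \<le> j0"
      then have "(\<tau> ^^ j0) i \<in> G1" using orbit_mem[of \<tau> G1 d i k j0] af(3) di k(2) by auto
      then show False using j0 by simp
    qed
    then show "k \<in> {1..j0}" using k by auto
  qed
  have Kfin: "finite (K ai)" using Ksub finite_subset by blast
  have one: "1 \<in> K ai" unfolding K_def td using dsupp by auto
  have tl1: "tau_lin G1 \<tau> d = (\<lambda>m. if m = j then 1 else 0)"
    unfolding d_def j_def using tau_lin_delta[OF af(5) i] .
  have keq: "del ai k = aj \<longleftrightarrow> k = 1" if kK: "k \<in> K ai" for k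
  proof -
    have k: "1 \<le> k" "\<forall>m<k. supp_in ((tau_lin G1 \<tau> ^^ m) d) G1" using kK unfolding K_def td by auto
    have "del ai k = aj \<longleftrightarrow> root_of n ((tau_lin G1 \<tau> ^^ k) d) = (\<lambda>m. eps j m - eps (Suc j) m)"
      unfolding del_def aj_def tau_pow_def cai by (auto simp: fun_eq_iff algebra_simps)
    also have "\<dots> \<longleftrightarrow> (tau_lin G1 \<tau> ^^ k) d = tau_lin G1 \<tau> d"
    proof
      assume "root_of n ((tau_lin G1 \<tau> ^^ k) d) = (\<lambda>m. eps j m - eps (Suc j) m)"
      then show "(tau_lin G1 \<tau> ^^ k) d = tau_lin G1 \<tau> d"
        unfolding tl1 using root_of_inj[OF supp_pow[OF adm k(1)] supp_delta[OF jn]] root_delta[OF jn] by auto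
    next
      assume "(tau_lin G1 \<tau> ^^ k) d = tau_lin G1 \<tau> d"
      then show "root_of n ((tau_lin G1 \<tau> ^^ k) d) = (\<lambda>m. eps j m - eps (Suc j) m)"
        unfolding tl1 using root_delta[OF jn] by simp
    qed
    also have "\<dots> \<longleftrightarrow> k = 1"
    proof
      assume e: "(tau_lin G1 \<tau> ^^ k) d = tau_lin G1 \<tau> d"
      show "k = 1"
      proof (rule ccontr)
        assume "k \<noteq> 1"
        then obtain k' where k': "k = Suc k'" "k' \<ge> 1" using k(1) by (cases k) auto
        have s': "supp_in ((tau_lin G1 \<tau> ^^ k') d) G1" using k(2) k' by auto
        have "tau_lin G1 \<tau> ((tau_lin G1 \<tau> ^^ k') d) = tau_lin G1 \<tau> d" using e k' by simp
        then have "(tau_lin G1 \<tau> ^^ k') d = d" using tau_lin_inj[OF s' dsupp af(3)] by blast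
        then show False using no_period[OF af(6) af(3) dsupp di k'(2)] k(2) k' by auto
      qed
    qed simp
    finally show ?thesis .
  qed
  have "Wsum n G1 \<tau> i (Suc i) (Suc j) j =
      (\<Sum>\<beta>\<in>S. \<Sum>k\<in>K \<beta>. root_vec n \<beta> i (Suc i) * root_vec n (del \<beta> k) (Suc j) j
                         - root_vec n (del \<beta> k) i (Suc i) * root_vec n \<beta> (Suc j) j)"
    unfolding Wsum_def wedge_def tensor_def S_def K_def del_def by simp
  also have "\<dots> = (\<Sum>\<beta>\<in>S. \<Sum>k\<in>K \<beta>. if \<beta> = ai then (if del \<beta> k = aj then 1 else 0) else (0::'a))"
  proof (intro sum.cong refl)
    fix \<beta> k assume b: "\<beta> \<in> S"
    obtain a b where ab: "1 \<le> a" "a < b" "b \<le> n" "\<beta> = (\<lambda>m. eps a m - eps b m)"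
      using b unfolding S_def posroots_def by auto
    have z: "root_vec n \<beta> (Suc j) j = (0::'a)"
      using eps_diff_inj[of a b "Suc j" j] ab by (auto simp: root_vec_eq)
    have "root_vec n \<beta> i (Suc i) = (if \<beta> = ai then 1 else (0::'a))"
      using in1 unfolding ai_def by (auto simp: root_vec_eq)
    moreover have "root_vec n (del \<beta> k) (Suc j) j = (if del \<beta> k = aj then 1 else (0::'a))"
      using jn unfolding aj_def by (auto simp: root_vec_eq)
    ultimately show "root_vec n \<beta> i (Suc i) * root_vec n (del \<beta> k) (Suc j) j
                         - root_vec n (del \<beta> k) i (Suc i) * root_vec n \<beta> (Suc j) j
        = (if \<beta> = ai then (if del \<beta> k = aj then 1 else 0) else (0::'a))"
      using z by simp
  qed
  also have "\<dots> = (\<Sum>k\<in>K ai. if del ai k = aj then 1 else (0::'a))"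
  proof -
    have fS: "finite S" unfolding S_def using finite_posroots by auto
    have "(\<Sum>\<beta>\<in>S. \<Sum>k\<in>K \<beta>. if \<beta> = ai then (if del \<beta> k = aj then 1 else 0) else (0::'a))
        = (\<Sum>\<beta>\<in>S. if \<beta> = ai then (\<Sum>k\<in>K \<beta>. if del \<beta> k = aj then 1 else 0) else (0::'a))"
      by (intro sum.cong refl) (simp add: sum_if_const)
    also have "\<dots> = (\<Sum>k\<in>K ai. if del ai k = aj then 1 else (0::'a))"
      using fS aiS by (simp add: sum.delta)
    finally show ?thesis .
  qed
  also have "\<dots> = (\<Sum>k\<in>K ai. if k = 1 then 1 else (0::'a))"
    by (intro sum.cong refl) (simp add: keq)
  also have "\<dots> = 1" using Kfin one by (simp add: sum.delta)
  finally have W: "Wsum n G1 \<tau> i (Suc i) (Suc j) j = (1::'a)" .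
  have St: "Std n i (Suc i) (Suc j) j = (0::'a)" using jne by (auto simp: Std_val)
  have R: "r0 i (Suc i) (Suc j) j = 0" using hh_zero[OF hh] by auto
  show ?thesis unfolding r_BD_split j_def[symmetric] using W St R by simp
qed



lemma psi_tau:
  fixes t s :: "nat \<Rightarrow> 'a::field"
  assumes adm: "admissible n G1 G2 \<tau>" and n: "n \<ge> 1"
    and tnz: "\<forall>p\<in>{1..n}. t p \<noteq> 0" and ts: "\<forall>p\<in>{1..<n}. t p = s p * t (Suc p)"
    and sc: "\<forall>i\<in>G1. s i = s (\<tau> i)"
    and \<beta>: "\<beta> \<in> posroots n \<inter> lattice n G1" and k: "1 \<le> k" "tau_defined n G1 \<tau> \<beta> k"
  shows "(\<Prod>p\<in>{1..n}. t p powi (tau_pow n G1 \<tau> \<beta> k p)) = (\<Prod>p\<in>{1..n}. t p powi (\<beta> p))"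
proof -
  note af = adm_facts[OF adm]
  define c where "c = coeffs n G1 \<beta>"
  have c: "supp_in c G1" "\<beta> = root_of n c" using coeffs_lattice[of \<beta> n G1] \<beta> af(1) unfolding c_def by auto
  have cs: "supp_in c {1..<n}" using c(1) af(1) by (rule supp_mono)
  have td: "\<forall>m<k. supp_in ((tau_lin G1 \<tau> ^^ m) c) G1" using k(2) unfolding tau_defined_def c_def by simp
  have "(\<Prod>p\<in>{1..n}. t p powi (tau_pow n G1 \<tau> \<beta> k p)) = (\<Prod>m\<in>{1..<n}. s m powi ((tau_lin G1 \<tau> ^^ k) c m))"
    unfolding tau_pow_def c_def[symmetric] by (rule psi_root[OF tnz ts supp_pow[OF adm k(1)] n])
  also have "\<dots> = (\<Prod>m\<in>{1..<n}. s m powi c m)"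
    using inv_pow[OF af(5) af(1) _ af(3) sc td] af(2,4) by auto
  also have "\<dots> = (\<Prod>p\<in>{1..n}. t p powi (\<beta> p))"
    using psi_root[OF tnz ts cs n] c(2) by simp
  finally show ?thesis .
qed

lemma ratio_one:
  fixes t :: "nat \<Rightarrow> 'a::field"
  assumes "\<forall>p\<in>{1..n}. t p \<noteq> 0" "a \<in> {1..n}" "b \<in> {1..n}" "c \<in> {1..n}" "d \<in> {1..n}"
    and "t a * inverse (t b) = t d * inverse (t c)"
  shows "(t a * inverse (t b)) * (t c * inverse (t d)) = 1"
  using assms by (simp add: field_simps)

lemma dir2:
  fixes r0 :: "'a::field tens" and t s :: "nat \<Rightarrow> 'a"
  assumes adm: "admissible n G1 G2 \<tau>" and hh: "in_hh n r0" and n: "n \<ge> 1"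
    and tnz: "\<forall>p\<in>{1..n}. t p \<noteq> 0" and ts: "\<forall>p\<in>{1..<n}. t p = s p * t (Suc p)"
    and sc: "\<forall>i\<in>G1. s i = s (\<tau> i)"
  shows "Ad2 n (diag_mat n t) (r_BD n G1 \<tau> r0) = r_BD n G1 \<tau> r0"
proof (intro ext)
  fix a b c d
  let ?A = "{1..n::nat}"
  let ?R = "(t a * inverse (t b)) * (t c * inverse (t d))"
  show "Ad2 n (diag_mat n t) (r_BD n G1 \<tau> r0) a b c d = r_BD n G1 \<tau> r0 a b c d"
  proof (cases "a \<in> ?A \<and> b \<in> ?A \<and> c \<in> ?A \<and> d \<in> ?A")
    case False
    then show ?thesis unfolding Ad2_diag[OF tnz] using rBD_out[OF hh False] by simp
  next
    case True
    then have a: "a \<in> ?A" and b: "b \<in> ?A" and c: "c \<in> ?A" and d: "d \<in> ?A" by auto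
    have psi: "(\<Prod>p\<in>?A. t p powi (eps x p - eps y p)) = t x * inverse (t y)"
      if "x \<in> ?A" "y \<in> ?A" "x \<noteq> y" for x y using psi_eps[OF that] .
    have R0: "r0 a b c d * ?R = r0 a b c d"
    proof (cases "a = b \<and> c = d")
      case True then show ?thesis using tnz a c by simp
    next
      case False then show ?thesis using hh_zero[OF hh] by auto
    qed
    have RS: "Std n a b c d * ?R = Std n a b c d"
    proof (cases "1 \<le> a \<and> a < b \<and> b \<le> n \<and> c = b \<and> d = a")
      case True
      then have "?R = 1" using tnz a b by (simp add: field_simps)
      then show ?thesis by simp
    qed (auto simp: Std_val)
    have RW: "Wsum n G1 \<tau> a b c d * ?R = Wsum n G1 \<tau> a b c d"
      unfolding Wsum_def wedge_def tensor_def sum_distrib_right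
    proof (intro sum.cong refl)
      fix \<beta> k assume \<beta>: "\<beta> \<in> posroots n \<inter> lattice n G1"
        and kk: "k \<in> {k. 1 \<le> k \<and> tau_defined n G1 \<tau> \<beta> k}"
      then have k: "1 \<le> k" "tau_defined n G1 \<tau> \<beta> k" by auto
      define \<delta> where "\<delta> = (\<lambda>m. - tau_pow n G1 \<tau> \<beta> k m)"
      have PT: "(\<Prod>p\<in>?A. t p powi (tau_pow n G1 \<tau> \<beta> k p)) = (\<Prod>p\<in>?A. t p powi (\<beta> p))"
        by (rule psi_tau[OF adm n tnz ts sc \<beta> k])
      have tpd: "tau_pow n G1 \<tau> \<beta> k = (\<lambda>m. eps y m - eps x m)" if "\<delta> = (\<lambda>m. eps x m - eps y m)" for x y
        using that unfolding \<delta>_def by (metis (no_types, lifting) minus_diff_eq minus_minus)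
      have P1: "root_vec n \<beta> a b * root_vec n \<delta> c d * ?R = root_vec n \<beta> a b * root_vec n \<delta> c d"
      proof (cases "root_vec n \<beta> a b * root_vec n \<delta> c d = (0::'a)")
        case False
        then have h1: "a \<noteq> b" "\<beta> = (\<lambda>m. eps a m - eps b m)" and h2: "c \<noteq> d" "\<delta> = (\<lambda>m. eps c m - eps d m)"
          by (auto simp: root_vec_eq split: if_splits)
        have "t d * inverse (t c) = t a * inverse (t b)"
          using PT tpd[OF h2(2)] h1 psi[OF d c h2(1)[symmetric]] psi[OF a b h1(1)] by simp
        then have "?R = 1" using ratio_one[OF tnz a b c d] by simp
        then show ?thesis by simp
      qed simp
      have P2: "root_vec n \<delta> a b * root_vec n \<beta> c d * ?R = root_vec n \<delta> a b * root_vec n \<beta> c d"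
      proof (cases "root_vec n \<delta> a b * root_vec n \<beta> c d = (0::'a)")
        case False
        then have h1: "a \<noteq> b" "\<delta> = (\<lambda>m. eps a m - eps b m)" and h2: "c \<noteq> d" "\<beta> = (\<lambda>m. eps c m - eps d m)"
          by (auto simp: root_vec_eq split: if_splits)
        have "t b * inverse (t a) = t c * inverse (t d)"
          using PT tpd[OF h1(2)] h2 psi[OF b a h1(1)[symmetric]] psi[OF c d h2(1)] by simp
        then have "?R = 1" using tnz a b c d by (simp add: field_simps)
        then show ?thesis by simp
      qed simp
      show "(root_vec n \<beta> a b * root_vec n (\<lambda>m. - tau_pow n G1 \<tau> \<beta> k m) c d -
             root_vec n (\<lambda>m. - tau_pow n G1 \<tau> \<beta> k m) a b * root_vec n \<beta> c d) * ?R =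
            root_vec n \<beta> a b * root_vec n (\<lambda>m. - tau_pow n G1 \<tau> \<beta> k m) c d -
             root_vec n (\<lambda>m. - tau_pow n G1 \<tau> \<beta> k m) a b * root_vec n \<beta> c d"
        by (simp only: left_diff_distrib P1[unfolded \<delta>_def] P2[unfolded \<delta>_def])
    qed
    have "Ad2 n (diag_mat n t) (r_BD n G1 \<tau> r0) a b c d = r_BD n G1 \<tau> r0 a b c d * ?R"
      unfolding Ad2_diag[OF tnz] using True by (simp add: mult.assoc)
    also have "\<dots> = (r0 a b c d + Std n a b c d + Wsum n G1 \<tau> a b c d) * ?R" by (simp only: r_BD_split)
    also have "\<dots> = r0 a b c d * ?R + Std n a b c d * ?R + Wsum n G1 \<tau> a b c d * ?R" by (simp only: distrib_right)
    also have "\<dots> = r0 a b c d + Std n a b c d + Wsum n G1 \<tau> a b c d" by (simp only: R0 RS RW)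
    also have "\<dots> = r_BD n G1 \<tau> r0 a b c d" by (simp only: r_BD_split)
    finally show ?thesis .
  qed
qed



lemma prod_down:
  fixes t s :: "nat \<Rightarrow> 'a::field"
  assumes tnz: "\<forall>p\<in>{1..n}. t p \<noteq> 0" and sdef: "\<forall>m. s m = (if m < n then t m * inverse (t (Suc m)) else t n)"
  shows "i \<in> {1..n} \<Longrightarrow> t i = (\<Prod>m\<in>{i..n}. s m)"
proof (induction "n - i" arbitrary: i)
  case 0
  then have "i = n" by auto
  then show ?case using sdef by simp
next
  case (Suc q)
  then have i: "i < n" "1 \<le> i" by auto
  have IH: "t (Suc i) = (\<Prod>m\<in>{Suc i..n}. s m)" using Suc i by auto
  have "(\<Prod>m\<in>{i..n}. s m) = s i * (\<Prod>m\<in>{Suc i..n}. s m)" using i by (simp add: prod.atLeast_Suc_atMost)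
  also have "\<dots> = t i * inverse (t (Suc i)) * t (Suc i)" using IH sdef i by simp
  also have "\<dots> = t i" using tnz i by simp
  finally show ?case by simp
qed

lemma ratio_aux:
  fixes a b c d :: "'a::field"
  assumes "b \<noteq> 0" "c \<noteq> 0" "d \<noteq> 0" "(a * inverse b) * (c * inverse d) = 1"
  shows "a * inverse b = d * inverse c"
  using assms by (simp add: field_simps)

theorem mainTheorem8:
  fixes n :: nat and G1 G2 :: "nat set" and \<tau> :: "nat \<Rightarrow> nat" and r0 :: "Kbar tens"
  assumes "n \<ge> 2"
    and "admissible n G1 G2 \<tau>"
    and "in_hh n r0"
    and "\<forall>a b c d. r0 a b c d + flip21 r0 a b c d = Omega0 n a b c d"
    and "\<forall>i\<in>G1. \<forall>a b. slot1 n (root_fun (\<tau> i)) r0 a b + slot2 n (root_fun i) r0 a b = 0"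
  shows "Cent n (r_BD n G1 \<tau> r0) =
    {T. \<exists>s :: nat \<Rightarrow> Kbar. (\<forall>i\<in>{1..n}. s i \<noteq> 0) \<and> (\<forall>i\<in>G1. s i = s (\<tau> i)) \<and>
         T = diag_mat n (\<lambda>i. \<Prod>m\<in>{i..n}. s m)}"
proof -
  note adm = assms(2) and hh = assms(3) and om = assms(4)
  note af = adm_facts[OF adm]
  have n1: "n \<ge> 1" using assms(1) by simp
  let ?A = "{1..n::nat}"
  let ?r = "r_BD n G1 \<tau> r0"
  show ?thesis
  proof (intro equalityI subsetI)
    fix P assume "P \<in> Cent n ?r"
    then have P: "P \<in> Defs.GL n" and fx: "Ad2 n P ?r = ?r" unfolding Cent_def by auto
    define \<mu> where "\<mu> = (\<lambda>a. r0 a a a a + of_nat (n - a) :: Kbar)"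
    have offd: "P a b = 0" if a: "a \<in> ?A" and b: "b \<in> ?A" and ab: "a \<noteq> b" for a b
    proof -
      have "(\<mu> a - \<mu> b) * P a b = 0"
        by (rule commute_diag[OF P fx _ a b]) (simp add: mc_rBD[OF adm hh] \<mu>_def)
      moreover have "\<mu> a \<noteq> \<mu> b"
      proof
        assume "\<mu> a = \<mu> b"
        then have "(of_nat (n - a) :: Kbar) = of_nat (n - b)"
          unfolding \<mu>_def using r0_diag_const[OF om a b] by simp
        then have "n - a = n - b" by (metis of_nat_eq_iff)
        then show False using a b ab by auto
      qed
      ultimately show ?thesis by simp
    qed
    define t where "t = (\<lambda>i. P i i)"
    have inv: "inverse_pair n P (mat_inv n P)" by (rule GL_inv[OF P])
    have tnz: "\<forall>p\<in>?A. t p \<noteq> 0"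
    proof
      fix p assume p: "p \<in> ?A"
      have "mat_mult n P (mat_inv n P) p p = 1" using inv p unfolding inverse_pair_def mat_id_def by simp
      moreover have "mat_mult n P (mat_inv n P) p p = P p p * mat_inv n P p p"
        unfolding mat_mult_def using p offd[OF p] by (subst sum.remove[of _ p]) (auto intro!: sum.neutral)
      ultimately show "t p \<noteq> 0" unfolding t_def by auto
    qed
    have Pd: "P = diag_mat n t"
    proof (intro ext)
      fix a b show "P a b = diag_mat n t a b"
        using offd[of a b] P unfolding diag_mat_def t_def GL_def is_mat_def by auto
    qed
    define s where "s = (\<lambda>m. if m < n then t m * inverse (t (Suc m)) else t n)"
    have snz: "\<forall>i\<in>?A. s i \<noteq> 0" using tnz unfolding s_def by auto
    have tprod: "t i = (\<Prod>m\<in>{i..n}. s m)" if "i \<in> ?A" for i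
      using prod_down[OF tnz, of s] that unfolding s_def by auto
    have sc: "\<forall>i\<in>G1. s i = s (\<tau> i)"
    proof
      fix i assume i: "i \<in> G1"
      define j where "j = \<tau> i"
      have in1: "i \<in> {1..<n}" using af(1) i by auto
      have jn: "j \<in> {1..<n}" using af(2,4) i unfolding j_def by auto
      have "Ad2 n P ?r i (Suc i) (Suc j) j = ?r i (Suc i) (Suc j) j" using fx by simp
      then have "(t i * inverse (t (Suc i))) * (t (Suc j) * inverse (t j)) = 1"
        unfolding Pd Ad2_diag[OF tnz] using rBD_comp[OF adm hh i] in1 jn unfolding j_def by auto
      then have "t i * inverse (t (Suc i)) = t j * inverse (t (Suc j))"
        by (rule ratio_aux[rotated 3]) (use tnz in1 jn in auto)
      then show "s i = s (\<tau> i)" unfolding j_def[symmetric] s_def using in1 jn by simp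
    qed
    have "P = diag_mat n (\<lambda>i. \<Prod>m\<in>{i..n}. s m)"
      unfolding Pd diag_mat_def using tprod by (intro ext) auto
    then show "P \<in> {T. \<exists>s :: nat \<Rightarrow> Kbar. (\<forall>i\<in>{1..n}. s i \<noteq> 0) \<and> (\<forall>i\<in>G1. s i = s (\<tau> i)) \<and>
         T = diag_mat n (\<lambda>i. \<Prod>m\<in>{i..n}. s m)}" using snz sc by blast
  next
    fix T assume "T \<in> {T. \<exists>s :: nat \<Rightarrow> Kbar. (\<forall>i\<in>{1..n}. s i \<noteq> 0) \<and> (\<forall>i\<in>G1. s i = s (\<tau> i)) \<and>
         T = diag_mat n (\<lambda>i. \<Prod>m\<in>{i..n}. s m)}"
    then obtain s :: "nat \<Rightarrow> Kbar" where snz: "\<forall>i\<in>{1..n}. s i \<noteq> 0" and sc: "\<forall>i\<in>G1. s i = s (\<tau> i)"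
      and T: "T = diag_mat n (\<lambda>i. \<Prod>m\<in>{i..n}. s m)" by blast
    define t where "t = (\<lambda>i. \<Prod>m\<in>{i..n}. s m)"
    have tnz: "\<forall>p\<in>?A. t p \<noteq> 0" unfolding t_def using snz by (auto simp: prod_zero_iff)
    have ts: "\<forall>p\<in>{1..<n}. t p = s p * t (Suc p)" unfolding t_def by (auto simp: prod.atLeast_Suc_atMost)
    have "T \<in> Defs.GL n" unfolding T t_def[symmetric] using diag_inv(2)[OF tnz] .
    moreover have "Ad2 n T ?r = ?r" unfolding T t_def[symmetric] by (rule dir2[OF adm hh n1 tnz ts sc])
    ultimately show "T \<in> Cent n ?r" unfolding Cent_def by auto
  qed
qed

end
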